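(* Let $D$ be a finite directed graph (parallel directed edges allowed, no loops) with nonempty vertex set $V$, in which every pair of adjacent vertices is joined by at least two directed edges (not necessarily in the same direction). Let $w:V\to\mathbb{N}^+$, and write $W=w[V]$ and $K=\alpha_w(D)$. Then $$\sum_{xy\in E(D)} w(x)\ \ge\ \frac{W^2}{K}-W,$$ where the sum runs over all directed edges $xy$ (directed from $x$ to $y$), counted with multiplicity.
   Context: For a function $f$ on a set $T$, $f[T]=\sum_{t\in T}f(t)$. Two vertices are adjacent if there is at least one directed edge between them (in either direction). $\alpha_w(D)$ is the maximum of $w[I]$ over all sets $I\subseteq V$ of pairwise non-adjacent vertices. *)

theory Defs
  imports Complex_Main "Graph_Theory.Digraph"
begin

definition adjacent :: "('a,'b) pre_digraph \<Rightarrow> 'a \<Rightarrow> 'a \<Rightarrow> bool" where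
  "adjacent G u v \<longleftrightarrow> (\<exists>e\<in>arcs G. (tail G e = u \<and> head G e = v) \<or> (tail G e = v \<and> head G e = u))"

definition arcs_between :: "('a,'b) pre_digraph \<Rightarrow> 'a \<Rightarrow> 'a \<Rightarrow> 'b set" where
  "arcs_between G u v = {e \<in> arcs G. (tail G e = u \<and> head G e = v) \<or> (tail G e = v \<and> head G e = u)}"

definition independent_set :: "('a,'b) pre_digraph \<Rightarrow> 'a set \<Rightarrow> bool" where
  "independent_set G I \<longleftrightarrow> I \<subseteq> verts G \<and> (\<forall>u\<in>I. \<forall>v\<in>I. \<not> adjacent G u v)"

definition alpha_w :: "('a,'b) pre_digraph \<Rightarrow> ('a \<Rightarrow> nat) \<Rightarrow> nat" where
  "alpha_w G w = Max {sum w I | I. independent_set G I}"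

end

theory Submission
  imports Defs
begin

definition SU :: "('a,'b) pre_digraph \<Rightarrow> ('a \<Rightarrow> nat) \<Rightarrow> 'a set \<Rightarrow> nat" where
  "SU D w U = (\<Sum>e\<in>{e\<in>arcs D. tail D e \<in> U \<and> head D e \<in> U}. w (tail D e))"

lemma adjacent_sym: "adjacent D u v = adjacent D v u"
  unfolding adjacent_def by blast

lemma arith_step:
  fixes W' a k S' S :: nat
  assumes "W'^2 \<le> k * (S' + W')" "a \<le> k" "S' + 2 * W' \<le> S"
  shows "(W' + a)^2 \<le> k * (S + (W' + a))"
proof -
  have h1: "a * W' \<le> k * W'" using assms(2) by (rule mult_right_mono) simp
  have h2: "a * a \<le> k * a" using assms(2) by (rule mult_right_mono) simp
  have h3: "k * (S' + 2 * W') \<le> k * S" using assms(3) by (rule mult_left_mono) simp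
  have "(W' + a)^2 = W'^2 + 2 * (a * W') + a * a" by (simp add: power2_eq_square algebra_simps)
  also have "\<dots> \<le> k * (S' + W') + 2 * (k * W') + k * a"
    using assms(1) h1 h2 by (intro add_mono) auto
  also have "\<dots> = k * (S' + 2 * W') + k * W' + k * a" by (simp add: algebra_simps)
  also have "\<dots> \<le> k * S + k * W' + k * a" using h3 by simp
  also have "\<dots> = k * (S + (W' + a))" by (simp add: algebra_simps)
  finally show ?thesis .
qed

lemma per_u:
  fixes w :: "'a \<Rightarrow> nat"
  assumes fin: "fin_digraph D" and lf: "loopfree_digraph D"
    and two: "\<And>u v. u \<in> verts D \<Longrightarrow> v \<in> verts D \<Longrightarrow> adjacent D u v \<Longrightarrow> card (arcs_between D u v) \<ge> 2"
    and pos: "\<And>x. x \<in> verts D \<Longrightarrow> w x > 0"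
    and U: "U \<subseteq> verts D" and IU: "I \<subseteq> U" and indI: "independent_set D I"
    and maxI: "\<And>J. J \<subseteq> U \<Longrightarrow> independent_set D J \<Longrightarrow> sum w J \<le> sum w I"
    and u: "u \<in> U" "u \<notin> I"
  shows "2 * w u \<le> (\<Sum>e\<in>(\<Union>v\<in>I. arcs_between D u v). w (tail D e))"
proof -
  interpret fin_digraph D by (rule fin)
  have finI: "finite I" by (rule finite_subset[OF subset_trans[OF IU U] finite_verts])
  have fab: "\<And>v. finite (arcs_between D u v)" unfolding arcs_between_def by simp
  have bnd: "\<And>v. v \<in> I \<Longrightarrow> adjacent D u v \<Longrightarrow> 2 * min (w u) (w v) \<le> (\<Sum>e\<in>arcs_between D u v. w (tail D e))"
  proof -
    fix v assume v: "v \<in> I" "adjacent D u v"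
    have c: "card (arcs_between D u v) \<ge> 2"
      by (rule two[OF subsetD[OF U u(1)] subsetD[OF U subsetD[OF IU v(1)]] v(2)])
    have "\<And>e. e \<in> arcs_between D u v \<Longrightarrow> min (w u) (w v) \<le> w (tail D e)"
      unfolding arcs_between_def by auto
    then have A: "of_nat (card (arcs_between D u v)) * min (w u) (w v) \<le> (\<Sum>e\<in>arcs_between D u v. w (tail D e))"
      by (rule sum_bounded_below)
    have B: "2 * min (w u) (w v) \<le> of_nat (card (arcs_between D u v)) * min (w u) (w v)"
      using c by simp
    show "2 * min (w u) (w v) \<le> (\<Sum>e\<in>arcs_between D u v. w (tail D e))"
      by (rule le_trans[OF B A])
  qed
  have disj: "\<And>v v'. v \<in> I \<Longrightarrow> v' \<in> I \<Longrightarrow> v \<noteq> v' \<Longrightarrow> arcs_between D u v \<inter> arcs_between D u v' = {}"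
  proof -
    fix v v' assume v: "v \<in> I" and v': "v' \<in> I" and ne: "v \<noteq> v'"
    have "u \<noteq> v" "u \<noteq> v'" using u v v' by auto
    then show "arcs_between D u v \<inter> arcs_between D u v' = {}"
      using ne unfolding arcs_between_def by auto
  qed
  have eq: "(\<Sum>e\<in>(\<Union>v\<in>I. arcs_between D u v). w (tail D e)) = (\<Sum>v\<in>I. \<Sum>e\<in>arcs_between D u v. w (tail D e))"
    by (rule sum.UNION_disjoint) (use finI fab disj in auto)
  define N where "N = {v\<in>I. adjacent D u v}"
  have finN: "finite N" using finI N_def by simp
  have NI: "N \<subseteq> I" using N_def by auto
  have wN: "w u \<le> sum w N"
  proof -
    define J where "J = insert u (I - N)"
    have "J \<subseteq> U" using J_def u IU by auto
    moreover have "independent_set D J"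
    proof -
      have nl: "\<not> adjacent D u u"
        using loopfree_digraph.no_loops[OF lf] unfolding adjacent_def by metis
      have "\<forall>x\<in>J. \<forall>y\<in>J. \<not> adjacent D x y"
      proof (intro ballI)
        fix x y assume x: "x \<in> J" and y: "y \<in> J"
        show "\<not> adjacent D x y"
        proof (cases "x = u")
          case True
          then show ?thesis using y nl unfolding J_def N_def by auto
        next
          case xu: False
          show ?thesis
          proof (cases "y = u")
            case True
            then show ?thesis using x xu adjacent_sym[of D x u] unfolding J_def N_def by auto
          next
            case False
            then show ?thesis using x y xu indI unfolding J_def independent_set_def by auto
          qed
        qed
      qed
      moreover have "J \<subseteq> verts D" using U IU u unfolding J_def by auto
      ultimately show ?thesis unfolding independent_set_def by blast
    qed
    ultimately have "sum w J \<le> sum w I" by (rule maxI)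
    moreover have "sum w J = w u + sum w (I - N)" unfolding J_def using finI u by simp
    moreover have "sum w I = sum w (I - N) + sum w N"
      using sum.subset_diff[OF NI finI] by simp
    ultimately show ?thesis by simp
  qed
  show ?thesis
  proof (cases "\<exists>v\<in>N. w u \<le> w v")
    case True
    then obtain v where v: "v \<in> N" "w u \<le> w v" by blast
    have "2 * w u \<le> (\<Sum>e\<in>arcs_between D u v. w (tail D e))"
      using bnd[of v] v N_def by (simp add: min_def)
    also have "\<dots> \<le> (\<Sum>v\<in>I. \<Sum>e\<in>arcs_between D u v. w (tail D e))"
      using v NI finI by (intro member_le_sum) auto
    finally show ?thesis using eq by simp
  next
    case False
    have "(\<Sum>v\<in>N. 2 * w v) = 2 * sum w N" by (rule sum_distrib_left[symmetric])
    then have "2 * w u \<le> (\<Sum>v\<in>N. 2 * w v)" using wN by linarith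
    also have "\<dots> \<le> (\<Sum>v\<in>N. \<Sum>e\<in>arcs_between D u v. w (tail D e))"
    proof (rule sum_mono)
      fix v assume v: "v \<in> N"
      then have "w v < w u" using False by auto
      then show "2 * w v \<le> (\<Sum>e\<in>arcs_between D u v. w (tail D e))"
        using bnd[of v] v N_def by (simp add: min_def)
    qed
    also have "\<dots> \<le> (\<Sum>v\<in>I. \<Sum>e\<in>arcs_between D u v. w (tail D e))"
      by (rule sum_mono2) (use finI NI in auto)
    finally show ?thesis using eq by simp
  qed
qed

lemma singleton_indep:
  assumes lf: "loopfree_digraph D" and x: "x \<in> verts D"
  shows "independent_set D {x}"
proof -
  have nl: "\<And>e. e \<in> arcs D \<Longrightarrow> tail D e \<noteq> head D e"
    by (rule loopfree_digraph.no_loops[OF lf])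
  have "\<not> adjacent D x x" unfolding adjacent_def using nl by metis
  then show ?thesis using x unfolding independent_set_def by simp
qed

lemma core:
  fixes w :: "'a \<Rightarrow> nat" and k :: nat
  assumes fin: "fin_digraph D" and lf: "loopfree_digraph D"
    and two: "\<And>u v. u \<in> verts D \<Longrightarrow> v \<in> verts D \<Longrightarrow> adjacent D u v \<Longrightarrow> card (arcs_between D u v) \<ge> 2"
    and pos: "\<And>x. x \<in> verts D \<Longrightarrow> w x > 0"
  shows "U \<subseteq> verts D \<Longrightarrow> (\<And>I. I \<subseteq> U \<Longrightarrow> independent_set D I \<Longrightarrow> sum w I \<le> k)
     \<Longrightarrow> (sum w U)^2 \<le> k * (SU D w U + sum w U)"
proof (induction "card U" arbitrary: U rule: less_induct)
  case less
  interpret fin_digraph D by (rule fin)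
  have finU: "finite U" by (rule finite_subset[OF less.prems(1) finite_verts])
  show ?case
  proof (cases "U = {}")
    case True
    then show ?thesis by (simp add: SU_def)
  next
    case False
    then obtain x where x: "x \<in> U" by blast
    define F where "F = {J. J \<subseteq> U \<and> independent_set D J}"
    have finF: "finite F" unfolding F_def using finU by simp
    have sx: "{x} \<in> F" unfolding F_def using singleton_indep[OF lf] x less.prems(1) by auto
    define m where "m = Max (sum w ` F)"
    have "m \<in> sum w ` F" unfolding m_def using finF sx by (intro Max_in) auto
    then obtain I where IF: "I \<in> F" and Im: "sum w I = m" by auto
    have IU: "I \<subseteq> U" and indI: "independent_set D I" using IF F_def by auto
    have maxI: "\<And>J. J \<subseteq> U \<Longrightarrow> independent_set D J \<Longrightarrow> sum w J \<le> sum w I"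
      unfolding Im m_def using finF by (intro Max_ge) (auto simp: F_def)
    have "w x \<le> sum w I" using maxI[of "{x}"] sx F_def by auto
    moreover have "w x > 0" using pos x less.prems(1) by auto
    ultimately have Ine: "I \<noteq> {}" by auto
    define U' where "U' = U - I"
    have finI: "finite I" by (rule finite_subset[OF IU finU])
    have lt: "card U' < card U" unfolding U'_def
      using Ine IU finU by (intro psubset_card_mono) auto
    have IH: "(sum w U')^2 \<le> k * (SU D w U' + sum w U')"
    proof -
      have a: "U' \<subseteq> verts D" using less.prems(1) unfolding U'_def by blast
      have b: "\<And>J. J \<subseteq> U' \<Longrightarrow> independent_set D J \<Longrightarrow> sum w J \<le> k"
        using less.prems(2) unfolding U'_def by blast
      show ?thesis by (rule less.hyps[OF lt a b])
    qed
    define f where "f e = w (tail D e)" for e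
    define EU where "EU = {e\<in>arcs D. tail D e \<in> U \<and> head D e \<in> U}"
    define EU' where "EU' = {e\<in>arcs D. tail D e \<in> U' \<and> head D e \<in> U'}"
    define A where "A u = (\<Union>v\<in>I. arcs_between D u v)" for u
    have finEU: "finite EU" unfolding EU_def by simp
    have sub1: "EU' \<subseteq> EU" unfolding EU_def EU'_def U'_def by auto
    have sub2: "(\<Union>u\<in>U'. A u) \<subseteq> EU - EU'"
    proof
      fix e assume "e \<in> (\<Union>u\<in>U'. A u)"
      then obtain u v where u: "u \<in> U'" and v: "v \<in> I" and e: "e \<in> arcs_between D u v"
        unfolding A_def by blast
      have ea: "e \<in> arcs D" and ends: "(tail D e = u \<and> head D e = v) \<or> (tail D e = v \<and> head D e = u)"
        using e unfolding arcs_between_def by auto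
      have "u \<in> U" "v \<in> U" "v \<notin> U'" using u v IU unfolding U'_def by auto
      then show "e \<in> EU - EU'" using ea ends unfolding EU_def EU'_def by auto
    qed
    have finA: "\<And>u. finite (A u)" unfolding A_def arcs_between_def using finI by auto
    have finU': "finite U'" unfolding U'_def using finU by simp
    have disjA: "\<And>u u'. u \<in> U' \<Longrightarrow> u' \<in> U' \<Longrightarrow> u \<noteq> u' \<Longrightarrow> A u \<inter> A u' = {}"
    proof -
      fix u u' assume u: "u \<in> U'" and u': "u' \<in> U'" and ne: "u \<noteq> u'"
      have "u \<notin> I" "u' \<notin> I" using u u' unfolding U'_def by auto
      show "A u \<inter> A u' = {}"
      proof (rule ccontr)
        assume "A u \<inter> A u' \<noteq> {}"
        then obtain e v v' where "v \<in> I" "v' \<in> I" "e \<in> arcs_between D u v" "e \<in> arcs_between D u' v'"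
          unfolding A_def by blast
        then show False using \<open>u \<notin> I\<close> \<open>u' \<notin> I\<close> ne unfolding arcs_between_def by auto
      qed
    qed
    have s1: "sum f EU = sum f (EU - EU') + sum f EU'"
      using sum.subset_diff[OF sub1 finEU] by simp
    have s2: "sum f (\<Union>u\<in>U'. A u) \<le> sum f (EU - EU')"
      using sub2 finEU by (intro sum_mono2) auto
    have s3: "sum f (\<Union>u\<in>U'. A u) = (\<Sum>u\<in>U'. sum f (A u))"
      by (rule sum.UNION_disjoint) (use finU' finA disjA in auto)
    have s4: "(\<Sum>u\<in>U'. 2 * w u) \<le> (\<Sum>u\<in>U'. sum f (A u))"
    proof (rule sum_mono)
      fix u assume u: "u \<in> U'"
      show "2 * w u \<le> sum f (A u)"
        unfolding A_def f_def
        by (rule per_u[OF fin lf two pos less.prems(1) IU indI maxI]) (use u U'_def in auto)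
    qed
    have key: "SU D w U' + 2 * sum w U' \<le> SU D w U"
    proof -
      have "SU D w U = sum f EU" unfolding SU_def EU_def f_def by simp
      moreover have "SU D w U' = sum f EU'" unfolding SU_def EU'_def f_def by simp
      moreover have "2 * sum w U' = (\<Sum>u\<in>U'. 2 * w u)" by (simp add: sum_distrib_left)
      ultimately show ?thesis using s1 s2 s3 s4 by linarith
    qed
    have WU: "sum w U = sum w U' + sum w I"
      unfolding U'_def using sum.subset_diff[OF IU finU] by simp
    have Ik: "sum w I \<le> k" using less.prems(2)[OF IU indI] .
    show ?thesis unfolding WU using arith_step[OF IH Ik key] .
  qed
qed

theorem theorem3p2:
  fixes D :: "('a,'b) pre_digraph" and w :: "'a \<Rightarrow> nat"
  assumes "fin_digraph D"
    and "loopfree_digraph D"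
    and "verts D \<noteq> {}"
    and "\<And>u v. u \<in> verts D \<Longrightarrow> v \<in> verts D \<Longrightarrow> adjacent D u v \<Longrightarrow> card (arcs_between D u v) \<ge> 2"
    and "\<And>x. x \<in> verts D \<Longrightarrow> w x > 0"
  shows "(\<Sum>e\<in>arcs D. real (w (tail D e))) \<ge>
           (real (sum w (verts D)))\<^sup>2 / real (alpha_w D w) - real (sum w (verts D))"
proof -
  interpret fin_digraph D by (rule assms(1))
  define k where "k = alpha_w D w"
  have finS: "finite {sum w I | I. independent_set D I}"
  proof -
    have "{sum w I | I. independent_set D I} \<subseteq> sum w ` Pow (verts D)"
      unfolding independent_set_def by auto
    moreover have "finite (sum w ` Pow (verts D))" by simp
    ultimately show ?thesis by (rule finite_subset)
  qed
  have bnd: "\<And>I. independent_set D I \<Longrightarrow> sum w I \<le> k"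
    unfolding k_def alpha_w_def using finS by (intro Max_ge) auto
  obtain x where x: "x \<in> verts D" using assms(3) by blast
  have "w x \<le> k" using bnd[OF singleton_indep[OF assms(2) x]] by simp
  then have kpos: "k > 0" using assms(5)[OF x] by simp
  have c: "(sum w (verts D))^2 \<le> k * (SU D w (verts D) + sum w (verts D))"
    by (rule core[OF assms(1,2,4,5)]) (use bnd in auto)
  have "SU D w (verts D) \<le> (\<Sum>e\<in>arcs D. w (tail D e))"
    unfolding SU_def by (intro sum_mono2) auto
  then have "k * (SU D w (verts D) + sum w (verts D)) \<le> k * ((\<Sum>e\<in>arcs D. w (tail D e)) + sum w (verts D))"
    by (intro mult_left_mono) auto
  then have c2: "(sum w (verts D))^2 \<le> k * ((\<Sum>e\<in>arcs D. w (tail D e)) + sum w (verts D))"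
    by (rule le_trans[OF c])
  define W where "W = real (sum w (verts D))"
  define S where "S = (\<Sum>e\<in>arcs D. real (w (tail D e)))"
  have "W^2 \<le> real k * (S + W)"
  proof -
    have "real ((sum w (verts D))^2) \<le> real (k * ((\<Sum>e\<in>arcs D. w (tail D e)) + sum w (verts D)))"
      using c2 by (simp only: of_nat_le_iff)
    then show ?thesis unfolding W_def S_def by simp
  qed
  then have "W^2 / real k \<le> S + W" using kpos by (simp add: divide_le_eq mult.commute)
  then show ?thesis unfolding W_def S_def k_def by simp
qed

end
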